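(* Let $G=(V,E,A)$ be an undirected, unweighted attributed graph with attribute set $A=\{a,b\}$ (each vertex $v$ has one attribute $A(v)\in\{a,b\}$), let $color:V\to\mathbb{N}$ be a fixed proper vertex coloring of $G$ (adjacent vertices receive distinct colors), and let $k,\delta$ be integers. For a subgraph $H$ of $G$, an edge $(u,v)$ of $H$ and an attribute $x\in\{a,b\}$, let $$\overline{sup}^{H}_{x}(u,v)=\bigl|\{color(w)\;:\; w\in N_H(u)\cap N_H(v),\ A(w)=x\}\bigr|.$$ Let $G'$ be the maximal subgraph of $G$ such that for every edge $(u,v)$ of $G'$: (i) if $A(u)=A(v)=a$, then $\overline{sup}^{G'}_{a}(u,v)\ge k-2$ and $\overline{sup}^{G'}_{b}(u,v)\ge k$; (ii) if $A(u)=A(v)=b$, then $\overline{sup}^{G'}_{a}(u,v)\ge k$ and $\overline{sup}^{G'}_{b}(u,v)\ge k-2$; (iii) if $\{A(u),A(v)\}=\{a,b\}$, then $\overline{sup}^{G'}_{a}(u,v)\ge k-1$ and $\overline{sup}^{G'}_{b}(u,v)\ge k-1$. Then every $(k,\delta)$-relative fair clique of $G$ is contained in $G'$ (i.e., all its vertices and all edges among them belong to $G'$).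
   Context: For a vertex set $S$, $cnt_S(a)=|\{v\in S: A(v)=a\}|$ and $cnt_S(b)=|\{v\in S: A(v)=b\}|$. $N_H(u)$ denotes the set of neighbors of $u$ in $H$. A $(k,\delta)$-relative fair clique of $G$ is a clique $C$ of $G$ such that (1) $cnt_C(a)\ge k$, $cnt_C(b)\ge k$ and $|cnt_C(a)-cnt_C(b)|\le\delta$, and (2) there is no clique $C'\supsetneq C$ of $G$ satisfying (1). The quantity $\overline{sup}_x(u,v)$ is called the colorful support of edge $(u,v)$ with respect to attribute $x$. *)

theory Defs
  imports Main
begin

datatype attr = AttrA | AttrB

definition undirected_graph :: "'v set \<Rightarrow> ('v \<times> 'v) set \<Rightarrow> bool" where
  "undirected_graph V E \<longleftrightarrow> finite V \<and> E \<subseteq> V \<times> V \<and> sym E \<and> irrefl E"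

definition proper_coloring :: "('v \<times> 'v) set \<Rightarrow> ('v \<Rightarrow> nat) \<Rightarrow> bool" where
  "proper_coloring E color \<longleftrightarrow> (\<forall>u v. (u, v) \<in> E \<longrightarrow> color u \<noteq> color v)"

definition nbrs :: "('v \<times> 'v) set \<Rightarrow> 'v \<Rightarrow> 'v set" where
  "nbrs F u = {w. (u, w) \<in> F}"

definition cnt :: "('v \<Rightarrow> attr) \<Rightarrow> 'v set \<Rightarrow> attr \<Rightarrow> nat" where
  "cnt A S x = card {v \<in> S. A v = x}"

definition is_clique :: "'v set \<Rightarrow> ('v \<times> 'v) set \<Rightarrow> 'v set \<Rightarrow> bool" where
  "is_clique V E C \<longleftrightarrow> C \<subseteq> V \<and> (\<forall>u\<in>C. \<forall>v\<in>C. u \<noteq> v \<longrightarrow> (u, v) \<in> E)"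

definition fair_cond :: "('v \<Rightarrow> attr) \<Rightarrow> int \<Rightarrow> int \<Rightarrow> 'v set \<Rightarrow> bool" where
  "fair_cond A k \<delta> C \<longleftrightarrow>
     int (cnt A C AttrA) \<ge> k \<and> int (cnt A C AttrB) \<ge> k \<and>
     \<bar>int (cnt A C AttrA) - int (cnt A C AttrB)\<bar> \<le> \<delta>"

definition relative_fair_clique ::
  "'v set \<Rightarrow> ('v \<times> 'v) set \<Rightarrow> ('v \<Rightarrow> attr) \<Rightarrow> int \<Rightarrow> int \<Rightarrow> 'v set \<Rightarrow> bool" where
  "relative_fair_clique V E A k \<delta> C \<longleftrightarrow>
     is_clique V E C \<and> fair_cond A k \<delta> C \<and>
     \<not> (\<exists>C'. C \<subset> C' \<and> is_clique V E C' \<and> fair_cond A k \<delta> C')"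

definition colorful_sup ::
  "('v \<Rightarrow> nat) \<Rightarrow> ('v \<Rightarrow> attr) \<Rightarrow> ('v \<times> 'v) set \<Rightarrow> attr \<Rightarrow> 'v \<Rightarrow> 'v \<Rightarrow> nat" where
  "colorful_sup color A F x u v =
     card (color ` {w \<in> nbrs F u \<inter> nbrs F v. A w = x})"

definition is_subgraph :: "'v set \<Rightarrow> ('v \<times> 'v) set \<Rightarrow> 'v set \<Rightarrow> ('v \<times> 'v) set \<Rightarrow> bool" where
  "is_subgraph V E W F \<longleftrightarrow> W \<subseteq> V \<and> F \<subseteq> E \<and> F \<subseteq> W \<times> W \<and> sym F"

definition support_cond ::
  "('v \<Rightarrow> nat) \<Rightarrow> ('v \<Rightarrow> attr) \<Rightarrow> int \<Rightarrow> ('v \<times> 'v) set \<Rightarrow> bool" where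
  "support_cond color A k F \<longleftrightarrow>
     (\<forall>(u, v) \<in> F.
        (A u = AttrA \<and> A v = AttrA \<longrightarrow>
           int (colorful_sup color A F AttrA u v) \<ge> k - 2 \<and>
           int (colorful_sup color A F AttrB u v) \<ge> k) \<and>
        (A u = AttrB \<and> A v = AttrB \<longrightarrow>
           int (colorful_sup color A F AttrA u v) \<ge> k \<and>
           int (colorful_sup color A F AttrB u v) \<ge> k - 2) \<and>
        (A u \<noteq> A v \<longrightarrow>
           int (colorful_sup color A F AttrA u v) \<ge> k - 1 \<and>
           int (colorful_sup color A F AttrB u v) \<ge> k - 1))"

text \<open>The maximal subgraph G' satisfying (i)-(iii): the union of all subgraphs
  satisfying the conditions (which is the unique maximum, since the conditions are
  monotone under taking unions).\<close>
definition Gprime ::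
  "'v set \<Rightarrow> ('v \<times> 'v) set \<Rightarrow> ('v \<Rightarrow> nat) \<Rightarrow> ('v \<Rightarrow> attr) \<Rightarrow> int \<Rightarrow> 'v set \<times> ('v \<times> 'v) set" where
  "Gprime V E color A k =
     (\<Union>{W. \<exists>F. is_subgraph V E W F \<and> support_cond color A k F},
      \<Union>{F. \<exists>W. is_subgraph V E W F \<and> support_cond color A k F})"

end

theory Submission
  imports Defs
begin

lemma sup_clique:
  assumes fin: "finite C" and inj: "inj_on color C"
    and u: "u \<in> C" and v: "v \<in> C" and uv: "u \<noteq> v"
    and F: "F = {(p, q). p \<in> C \<and> q \<in> C \<and> p \<noteq> q}"
  shows "int (colorful_sup color A F x u v) =
         int (cnt A C x) - (if A u = x then 1 else 0) - (if A v = x then 1 else 0)"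
proof -
  have S: "{w \<in> nbrs F u \<inter> nbrs F v. A w = x} = {w \<in> C. A w = x} - {u, v}"
    using u v by (auto simp: nbrs_def F)
  have inj2: "inj_on color ({w \<in> C. A w = x} - {u, v})"
    using inj by (rule inj_on_subset) auto
  have fin2: "finite {w \<in> C. A w = x}" using fin by simp
  have "card ({w \<in> C. A w = x} - {u, v}) = card {w \<in> C. A w = x} - card ({w \<in> C. A w = x} \<inter> {u, v})"
    by (rule card_Diff_subset_Int) simp
  moreover have "card ({w \<in> C. A w = x} \<inter> {u, v}) = (if A u = x then 1 else 0) + (if A v = x then 1 else 0)"
    using u v uv by (cases "A u = x"; cases "A v = x") (auto simp: Int_insert_right)
  moreover have "card ({w \<in> C. A w = x} \<inter> {u, v}) \<le> card {w \<in> C. A w = x}"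
    using fin2 by (simp add: card_mono)
  ultimately show ?thesis
    unfolding colorful_sup_def cnt_def S card_image[OF inj2] by auto
qed

theorem lemma3:
  fixes V :: "'v set" and E :: "('v \<times> 'v) set" and A :: "'v \<Rightarrow> attr"
    and color :: "'v \<Rightarrow> nat" and k \<delta> :: int and C :: "'v set"
  assumes "undirected_graph V E"
    and "proper_coloring E color"
    and "relative_fair_clique V E A k \<delta> C"
  shows "C \<subseteq> fst (Gprime V E color A k) \<and>
         (\<forall>u\<in>C. \<forall>v\<in>C. u \<noteq> v \<longrightarrow> (u, v) \<in> snd (Gprime V E color A k))"
proof -
  define F where "F = {(p, q). p \<in> C \<and> q \<in> C \<and> p \<noteq> q}"
  have cl: "is_clique V E C" and fc: "fair_cond A k \<delta> C"
    using assms(3) by (auto simp: relative_fair_clique_def)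
  have CV: "C \<subseteq> V" and CE: "\<And>u v. u \<in> C \<Longrightarrow> v \<in> C \<Longrightarrow> u \<noteq> v \<Longrightarrow> (u, v) \<in> E"
    using cl by (auto simp: is_clique_def)
  have fin: "finite C" using assms(1) CV by (auto simp: undirected_graph_def intro: finite_subset)
  have inj: "inj_on color C"
    using assms(2) CE unfolding inj_on_def proper_coloring_def by blast
  have sg: "is_subgraph V E C F"
    using CV CE by (auto simp: is_subgraph_def F_def sym_def)
  have sc: "support_cond color A k F"
    unfolding support_cond_def
  proof (intro ballI, clarify)
    fix u v assume "(u, v) \<in> F"
    then have u: "u \<in> C" and v: "v \<in> C" and uv: "u \<noteq> v" by (auto simp: F_def)
    note s = sup_clique[OF fin inj u v uv F_def, of A]
    show "(A u = AttrA \<and> A v = AttrA \<longrightarrow>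
           k - 2 \<le> int (colorful_sup color A F AttrA u v) \<and>
           k \<le> int (colorful_sup color A F AttrB u v)) \<and>
        (A u = AttrB \<and> A v = AttrB \<longrightarrow>
           k \<le> int (colorful_sup color A F AttrA u v) \<and>
           k - 2 \<le> int (colorful_sup color A F AttrB u v)) \<and>
        (A u \<noteq> A v \<longrightarrow>
           k - 1 \<le> int (colorful_sup color A F AttrA u v) \<and>
           k - 1 \<le> int (colorful_sup color A F AttrB u v))"
      using fc s[of AttrA] s[of AttrB] unfolding fair_cond_def
      by (cases "A u"; cases "A v") auto
  qed
  show ?thesis
  proof
    show "C \<subseteq> fst (Gprime V E color A k)"
      unfolding Gprime_def fst_conv using sg sc by blast
    show "\<forall>u\<in>C. \<forall>v\<in>C. u \<noteq> v \<longrightarrow> (u, v) \<in> snd (Gprime V E color A k)"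
      unfolding Gprime_def snd_conv proof (intro ballI impI UnionI CollectI)
      fix u v assume "u \<in> C" "v \<in> C" "u \<noteq> v"
      then show "(u, v) \<in> F" by (simp add: F_def)
    qed (use sg sc in blast)
  qed
qed

end
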